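(* Let $(G,k,M^*,M)$ be a critical tuple and let $\mathcal{C}$ be a set of directed cycles of $G_M$, each with $w_M(C)\le0$, such that every $e\in E^+(C^+)$ is contained in some cycle of $\mathcal{C}$ and, for every $C\in\mathcal{C}$, $C\cap C^+$ is a single path. Then there exists a subset $\mathcal{C}'\subseteq\mathcal{C}$ such that every $e\in E^+(C^+)$ is contained in some cycle of $\mathcal{C}'$, for every $C\in\mathcal{C}'$ the set $C\cap C^+$ is a single path, and every $e\in E^-(C^+)$ is contained in at most two cycles of $\mathcal{C}'$.
   Context: $R(H)$ is the set of red edges of an edge set $H$. For a perfect matching $M$ of a red/blue edge-colored bipartite graph $G=(A\sqcup B,E)$, $G_M$ is the directed graph on $A\sqcup B$ with edges of $M$ oriented from $A$ to $B$ and other edges from $B$ to $A$, weighted by $w_M(e)=0$ for blue $e$, $-1$ for red $e\in M$, $+1$ for red $e\notin M$; $E^+(H)$ (resp. $E^-(H)$) is the set of red edges of $H$ not in $M$ (resp. in $M$), $w_M(H)=|E^+(H)|-|E^-(H)|$. Cycles are identified with edge sets. For an edge $e$, $M^e$ is a perfect matching containing $e$ with the minimum number of red edges among those containing $e$. A tuple $(G,k,M^*,M)$ is critical if: every edge of $G$ lies in some perfect matching; $|R(M^* )|=k$; $|R(M)|<\frac13k$; every directed cycle $C$ of $G_M$ with $w_M(C)>0$ has $|E^+(C)|>\frac23k$; and $|R(M^e)|<\frac13k$ for every red $e\in M^*\setminus M$. $C^+$ is the unique positive-weight directed cycle of $G_M$ contained in $M\Delta M^*$. *)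

theory Defs
  imports Complex_Main
begin

text \<open>A red/blue edge-coloured bipartite graph G = (A \<union> B, E) is given by disjoint
finite vertex sets A, B, an edge set E \<subseteq> A \<times> B (edge {a,b} stored as the pair (a,b),
a \<in> A, b \<in> B) and the set R \<subseteq> E of red edges (all other edges are blue).\<close>

definition bip_graph :: "'v set \<Rightarrow> 'v set \<Rightarrow> ('v \<times> 'v) set \<Rightarrow> ('v \<times> 'v) set \<Rightarrow> bool" where
  "bip_graph A B E R \<longleftrightarrow> finite A \<and> finite B \<and> A \<inter> B = {} \<and> E \<subseteq> A \<times> B \<and> R \<subseteq> E"

definition perfect_matching :: "'v set \<Rightarrow> 'v set \<Rightarrow> ('v \<times> 'v) set \<Rightarrow> ('v \<times> 'v) set \<Rightarrow> bool" where
  "perfect_matching A B E N \<longleftrightarrow> N \<subseteq> E \<and>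
     (\<forall>v \<in> A \<union> B. \<exists>!e. e \<in> N \<and> (v = fst e \<or> v = snd e))"

definition red_of :: "('v \<times> 'v) set \<Rightarrow> ('v \<times> 'v) set \<Rightarrow> ('v \<times> 'v) set" where
  "red_of R H = H \<inter> R"

definition Eplus :: "('v \<times> 'v) set \<Rightarrow> ('v \<times> 'v) set \<Rightarrow> ('v \<times> 'v) set \<Rightarrow> ('v \<times> 'v) set" where
  "Eplus R M H = red_of R H - M"

definition Eminus :: "('v \<times> 'v) set \<Rightarrow> ('v \<times> 'v) set \<Rightarrow> ('v \<times> 'v) set \<Rightarrow> ('v \<times> 'v) set" where
  "Eminus R M H = red_of R H \<inter> M"

definition wM :: "('v \<times> 'v) set \<Rightarrow> ('v \<times> 'v) set \<Rightarrow> ('v \<times> 'v) set \<Rightarrow> int" where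
  "wM R M H = int (card (Eplus R M H)) - int (card (Eminus R M H))"

text \<open>Arcs of G_M: edges of M oriented from A to B, the other edges of E from B to A.\<close>
definition arc_GM :: "('v \<times> 'v) set \<Rightarrow> ('v \<times> 'v) set \<Rightarrow> 'v \<Rightarrow> 'v \<Rightarrow> bool" where
  "arc_GM E M u v \<longleftrightarrow> (u, v) \<in> M \<or> ((v, u) \<in> E \<and> (v, u) \<notin> M)"

definition edge_of :: "('v \<times> 'v) set \<Rightarrow> 'v \<Rightarrow> 'v \<Rightarrow> 'v \<times> 'v" where
  "edge_of E u v = (if (u, v) \<in> E then (u, v) else (v, u))"

text \<open>Directed cycles of G_M, identified with their edge sets.\<close>
definition dcycle :: "('v \<times> 'v) set \<Rightarrow> ('v \<times> 'v) set \<Rightarrow> ('v \<times> 'v) set \<Rightarrow> bool" where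
  "dcycle E M C \<longleftrightarrow> (\<exists>vs. distinct vs \<and> length vs \<ge> 2 \<and>
     (\<forall>i < length vs. arc_GM E M (vs ! i) (vs ! ((i + 1) mod length vs))) \<and>
     C = {edge_of E (vs ! i) (vs ! ((i + 1) mod length vs)) | i. i < length vs})"

definition dpath :: "('v \<times> 'v) set \<Rightarrow> ('v \<times> 'v) set \<Rightarrow> ('v \<times> 'v) set \<Rightarrow> bool" where
  "dpath E M P \<longleftrightarrow> (\<exists>vs. distinct vs \<and> length vs \<ge> 2 \<and>
     (\<forall>i. i + 1 < length vs \<longrightarrow> arc_GM E M (vs ! i) (vs ! (i + 1))) \<and>
     P = {edge_of E (vs ! i) (vs ! (i + 1)) | i. i + 1 < length vs})"

definition red_Me :: "'v set \<Rightarrow> 'v set \<Rightarrow> ('v \<times> 'v) set \<Rightarrow> ('v \<times> 'v) set \<Rightarrow> 'v \<times> 'v \<Rightarrow> nat" where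
  "red_Me A B E R e = (LEAST n. \<exists>N. perfect_matching A B E N \<and> e \<in> N \<and> card (red_of R N) = n)"

definition critical ::
  "'v set \<Rightarrow> 'v set \<Rightarrow> ('v \<times> 'v) set \<Rightarrow> ('v \<times> 'v) set \<Rightarrow> nat \<Rightarrow> ('v \<times> 'v) set \<Rightarrow> ('v \<times> 'v) set \<Rightarrow> bool" where
  "critical A B E R k Ms M \<longleftrightarrow>
     bip_graph A B E R \<and> perfect_matching A B E Ms \<and> perfect_matching A B E M \<and>
     (\<forall>e \<in> E. \<exists>N. perfect_matching A B E N \<and> e \<in> N) \<and>
     card (red_of R Ms) = k \<and>
     3 * real (card (red_of R M)) < real k \<and>
     (\<forall>C. dcycle E M C \<and> wM R M C > 0 \<longrightarrow> 3 * real (card (Eplus R M C)) > 2 * real k) \<and>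
     (\<forall>e \<in> red_of R (Ms - M). 3 * real (red_Me A B E R e) < real k)"

end

theory Submission
  imports Defs "HOL-Number_Theory.Cong"
begin

definition IS :: "nat \<Rightarrow> nat \<Rightarrow> nat \<Rightarrow> nat set" where
  "IS n s L = {(s + j) mod n | j. j < L}"

lemma IS_sub:
  fixes n s1 s2 s3 L1 L2 L3 j1 j2 j3 :: nat
  assumes "j1 < L1" "j2 < L2" "j3 < L3"
    and "(s1 + j1) mod n = x" "(s2 + j2) mod n = x" "(s3 + j3) mod n = x"
    and "j3 \<le> j1" "L3 - j3 \<le> L2 - j2"
  shows "IS n s3 L3 \<subseteq> IS n s1 L1 \<union> IS n s2 L2"
proof
  fix y assume "y \<in> IS n s3 L3"
  then obtain j' where j': "j' < L3" "y = (s3 + j') mod n" by (auto simp: IS_def)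
  show "y \<in> IS n s1 L1 \<union> IS n s2 L2"
  proof (cases "j' \<le> j3")
    case True
    define d where "d = j3 - j'"
    have "[s3 + j' + d = s1 + (j1 - d) + d] (mod n)"
      using assms True unfolding cong_def d_def by (simp add: algebra_simps)
    then have "[s3 + j' = s1 + (j1 - d)] (mod n)" using cong_add_rcancel_nat by blast
    then have "y = (s1 + (j1 - d)) mod n" using j' by (simp add: cong_def)
    moreover have "j1 - d < L1" using assms by simp
    ultimately show ?thesis by (auto simp: IS_def)
  next
    case False
    define d where "d = j' - j3"
    have "(s3 + j') mod n = (s3 + j3 + d) mod n" using False by (simp add: d_def)
    also have "\<dots> = ((s3 + j3) mod n + d) mod n" by (simp add: mod_add_left_eq)
    also have "\<dots> = ((s2 + j2) mod n + d) mod n" using assms by simp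
    also have "\<dots> = (s2 + (j2 + d)) mod n" by (simp add: mod_add_left_eq add.assoc)
    finally have "y = (s2 + (j2 + d)) mod n" using j' by simp
    moreover have "j2 + d < L2" using assms False j' by (simp add: d_def)
    ultimately show ?thesis by (auto simp: IS_def)
  qed
qed

lemma IS_three:
  fixes n s1 s2 s3 L1 L2 L3 j1 j2 j3 :: nat
  assumes a: "j1 < L1" "j2 < L2" "j3 < L3"
    and b: "(s1 + j1) mod n = x" "(s2 + j2) mod n = x" "(s3 + j3) mod n = x"
  shows "IS n s1 L1 \<subseteq> IS n s2 L2 \<union> IS n s3 L3 \<or> IS n s2 L2 \<subseteq> IS n s1 L1 \<union> IS n s3 L3
       \<or> IS n s3 L3 \<subseteq> IS n s1 L1 \<union> IS n s2 L2"
proof -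
  have c12: "IS n s3 L3 \<subseteq> IS n s1 L1 \<union> IS n s2 L2" if "j3 \<le> j1" "L3 - j3 \<le> L2 - j2"
    using IS_sub[OF a(1,2,3) b(1,2,3) that] .
  have c21: "IS n s3 L3 \<subseteq> IS n s1 L1 \<union> IS n s2 L2" if "j3 \<le> j2" "L3 - j3 \<le> L1 - j1"
    using IS_sub[OF a(2,1,3) b(2,1,3) that] by blast
  have c13: "IS n s2 L2 \<subseteq> IS n s1 L1 \<union> IS n s3 L3" if "j2 \<le> j1" "L2 - j2 \<le> L3 - j3"
    using IS_sub[OF a(1,3,2) b(1,3,2) that] .
  have c31: "IS n s2 L2 \<subseteq> IS n s1 L1 \<union> IS n s3 L3" if "j2 \<le> j3" "L2 - j2 \<le> L1 - j1"
    using IS_sub[OF a(3,1,2) b(3,1,2) that] by blast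
  have c23: "IS n s1 L1 \<subseteq> IS n s2 L2 \<union> IS n s3 L3" if "j1 \<le> j2" "L1 - j1 \<le> L3 - j3"
    using IS_sub[OF a(2,3,1) b(2,3,1) that] .
  have c32: "IS n s1 L1 \<subseteq> IS n s2 L2 \<union> IS n s3 L3" if "j1 \<le> j3" "L1 - j1 \<le> L2 - j2"
    using IS_sub[OF a(3,2,1) b(3,2,1) that] by blast
  show ?thesis
  proof (cases "j1 \<ge> j2 \<and> j1 \<ge> j3")
    case True
    then show ?thesis using c12 c13 by linarith
  next
    case F1: False
    show ?thesis
    proof (cases "j2 \<ge> j3")
      case True
      then have "j2 \<ge> j1 \<and> j2 \<ge> j3" using F1 by auto
      then show ?thesis using c21 c23 by linarith
    next
      case False
      then have "j3 \<ge> j1 \<and> j3 \<ge> j2" using F1 by auto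
      then show ?thesis using c31 c32 by linarith
    qed
  qed
qed

lemma arc_unique:
  assumes ME: "M \<subseteq> E" and anti: "\<And>a b. (a,b) \<in> E \<Longrightarrow> (b,a) \<notin> E"
    and "arc_GM E M u v" "arc_GM E M u' v'" "edge_of E u v = edge_of E u' v'"
  shows "u = u' \<and> v = v'"
  using assms unfolding arc_GM_def edge_of_def
  by (smt (verit, ccfv_threshold) Pair_inject subsetD)

lemma arc_edge:
  assumes ME: "M \<subseteq> E" and "arc_GM E M u v"
  shows "edge_of E u v \<in> E"
  using assms unfolding arc_GM_def edge_of_def by auto

lemma path_interval:
  fixes vs :: "'v list"
  assumes ME: "M \<subseteq> E" and anti: "\<And>a b. (a,b) \<in> E \<Longrightarrow> (b,a) \<notin> E"
    and dv: "distinct vs" and len: "length vs \<ge> 2"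
    and arcs: "\<forall>i < length vs. arc_GM E M (vs ! i) (vs ! ((i + 1) mod length vs))"
    and dp: "dpath E M P"
    and sub: "P \<subseteq> {edge_of E (vs ! i) (vs ! ((i + 1) mod length vs)) | i. i < length vs}"
  shows "\<exists>s L. P = (\<lambda>i. edge_of E (vs ! i) (vs ! ((i + 1) mod length vs))) ` IS (length vs) s L"
proof -
  define n where "n = length vs"
  define ce where "ce = (\<lambda>i. edge_of E (vs ! i) (vs ! ((i + 1) mod n)))"
  have n0: "n > 0" using len n_def by auto
  obtain ws where ws: "distinct ws" "length ws \<ge> 2"
    "\<forall>i. i + 1 < length ws \<longrightarrow> arc_GM E M (ws ! i) (ws ! (i + 1))"
    "P = {edge_of E (ws ! i) (ws ! (i + 1)) | i. i + 1 < length ws}"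
    using dp unfolding dpath_def by blast
  have step: "\<exists>i < n. ws ! j = vs ! i \<and> ws ! (j+1) = vs ! ((i + 1) mod n)" if j: "j + 1 < length ws" for j
  proof -
    have "edge_of E (ws ! j) (ws ! (j + 1)) \<in> P" using ws(4) j by blast
    then obtain i where i: "i < n" "edge_of E (ws ! j) (ws ! (j + 1)) = ce i"
      using sub unfolding ce_def n_def by blast
    have "arc_GM E M (vs ! i) (vs ! ((i + 1) mod n))" using arcs i(1) n_def by simp
    then have "ws ! j = vs ! i \<and> ws ! (j+1) = vs ! ((i + 1) mod n)"
      using arc_unique[OF ME anti, of "ws ! j" "ws ! (j+1)" "vs ! i" "vs ! ((i + 1) mod n)"]
        ws(3) j i(2) unfolding ce_def by blast
    then show ?thesis using i(1) by blast
  qed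
  obtain s where s: "s < n" "ws ! 0 = vs ! s" using step[of 0] ws(2) by auto
  have wsj: "ws ! j = vs ! ((s + j) mod n)" if "j < length ws" for j
    using that
  proof (induction j)
    case 0 then show ?case using s by simp
  next
    case (Suc j)
    then have IH: "ws ! j = vs ! ((s + j) mod n)" by simp
    obtain i where i: "i < n" "ws ! j = vs ! i" "ws ! (j+1) = vs ! ((i + 1) mod n)"
      using step[of j] Suc.prems by auto
    have "i = (s + j) mod n" using IH i dv n0 unfolding n_def
      by (metis mod_less_divisor nth_eq_iff_index_eq)
    then have "ws ! (j+1) = vs ! (((s + j) mod n + 1) mod n)" using i by simp
    also have "\<dots> = vs ! ((s + Suc j) mod n)" by (simp add: mod_Suc_eq)
    finally show ?case by simp
  qed
  have "P = ce ` IS n s (length ws - 1)"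
  proof -
    have e: "edge_of E (ws ! j) (ws ! (j + 1)) = ce ((s + j) mod n)" if "j + 1 < length ws" for j
    proof -
      have "ws ! (j+1) = vs ! ((s + j + 1) mod n)" using wsj[of "j+1"] that by simp
      also have "\<dots> = vs ! (((s + j) mod n + 1) mod n)" by (simp add: mod_Suc_eq)
      finally show ?thesis using wsj[of j] that unfolding ce_def by simp
    qed
    show ?thesis unfolding ws(4) IS_def
    proof (rule set_eqI, rule iffI)
      fix x assume "x \<in> {edge_of E (ws ! i) (ws ! (i + 1)) |i. i + 1 < length ws}"
      then obtain j where "j + 1 < length ws" "x = edge_of E (ws ! j) (ws ! (j + 1))" by blast
      then show "x \<in> ce ` {(s + j) mod n |j. j < length ws - 1}" using e by force
    next
      fix x assume "x \<in> ce ` {(s + j) mod n |j. j < length ws - 1}"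
      then obtain j where "j < length ws - 1" "x = ce ((s + j) mod n)" by blast
      then have "j + 1 < length ws" "x = edge_of E (ws ! j) (ws ! (j + 1))" using e[of j] by auto
      then show "x \<in> {edge_of E (ws ! i) (ws ! (i + 1)) |i. i + 1 < length ws}"
        by blast
    qed
  qed
  then show ?thesis unfolding ce_def n_def by blast
qed

lemma three_paths:
  fixes vs :: "'v list"
  assumes ME: "M \<subseteq> E" and anti: "\<And>a b. (a,b) \<in> E \<Longrightarrow> (b,a) \<notin> E"
    and dv: "distinct vs" and len: "length vs \<ge> 2"
    and arcs: "\<forall>i < length vs. arc_GM E M (vs ! i) (vs ! ((i + 1) mod length vs))"
    and Cp: "Cp = {edge_of E (vs ! i) (vs ! ((i + 1) mod length vs)) | i. i < length vs}"
    and P: "dpath E M P" "P \<subseteq> Cp" "e \<in> P"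
    and Q: "dpath E M Q" "Q \<subseteq> Cp" "e \<in> Q"
    and S: "dpath E M S" "S \<subseteq> Cp" "e \<in> S"
  shows "P \<subseteq> Q \<union> S \<or> Q \<subseteq> P \<union> S \<or> S \<subseteq> P \<union> Q"
proof -
  define n where "n = length vs"
  define ce where "ce = (\<lambda>i. edge_of E (vs ! i) (vs ! ((i + 1) mod n)))"
  have n0: "n > 0" using len n_def by auto
  have inj: "i = i'" if "i < n" "i' < n" "ce i = ce i'" for i i'
  proof -
    have "arc_GM E M (vs ! i) (vs ! ((i + 1) mod n))" "arc_GM E M (vs ! i') (vs ! ((i' + 1) mod n))"
      using arcs that n_def by auto
    then have "vs ! i = vs ! i'" using arc_unique[OF ME anti] that(3) unfolding ce_def by blast
    then show ?thesis using dv that n_def nth_eq_iff_index_eq by metis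
  qed
  obtain s1 L1 where 1: "P = ce ` IS n s1 L1"
    using path_interval[OF ME anti dv len arcs P(1)] P(2) Cp unfolding ce_def n_def by blast
  obtain s2 L2 where 2: "Q = ce ` IS n s2 L2"
    using path_interval[OF ME anti dv len arcs Q(1)] Q(2) Cp unfolding ce_def n_def by blast
  obtain s3 L3 where 3: "S = ce ` IS n s3 L3"
    using path_interval[OF ME anti dv len arcs S(1)] S(2) Cp unfolding ce_def n_def by blast
  obtain j1 where j1: "j1 < L1" "e = ce ((s1 + j1) mod n)" using P(3) 1 unfolding IS_def by blast
  obtain j2 where j2: "j2 < L2" "e = ce ((s2 + j2) mod n)" using Q(3) 2 unfolding IS_def by blast
  obtain j3 where j3: "j3 < L3" "e = ce ((s3 + j3) mod n)" using S(3) 3 unfolding IS_def by blast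
  have "(s2 + j2) mod n = (s1 + j1) mod n" using inj j1 j2 n0 by simp
  moreover have "(s3 + j3) mod n = (s1 + j1) mod n" using inj j1 j3 n0 by simp
  ultimately have "IS n s1 L1 \<subseteq> IS n s2 L2 \<union> IS n s3 L3 \<or> IS n s2 L2 \<subseteq> IS n s1 L1 \<union> IS n s3 L3
       \<or> IS n s3 L3 \<subseteq> IS n s1 L1 \<union> IS n s2 L2"
    using IS_three[OF j1(1) j2(1) j3(1), of s1 n "(s1 + j1) mod n" s2 s3] by simp
  then show ?thesis unfolding 1 2 3 by (metis image_Un image_mono)
qed

theorem lemma8:
  fixes A B :: "'v set" and E R M Ms Cp :: "('v \<times> 'v) set"
    and k :: nat and \<C> :: "('v \<times> 'v) set set"
  assumes crit: "critical A B E R k Ms M"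
    and Cp: "dcycle E M Cp" "Cp \<subseteq> (M - Ms) \<union> (Ms - M)" "wM R M Cp > 0"
    and cyc: "\<forall>C \<in> \<C>. dcycle E M C \<and> wM R M C \<le> 0"
    and cover: "\<forall>e \<in> Eplus R M Cp. \<exists>C \<in> \<C>. e \<in> C"
    and path: "\<forall>C \<in> \<C>. dpath E M (C \<inter> Cp)"
  shows "\<exists>\<C>' \<subseteq> \<C>. (\<forall>e \<in> Eplus R M Cp. \<exists>C \<in> \<C>'. e \<in> C) \<and>
           (\<forall>C \<in> \<C>'. dpath E M (C \<inter> Cp)) \<and>
           (\<forall>e \<in> Eminus R M Cp. card {C \<in> \<C>'. e \<in> C} \<le> 2)"
proof -
  have bg: "bip_graph A B E R" and pm: "perfect_matching A B E M" using crit unfolding critical_def by auto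
  have ME: "M \<subseteq> E" using pm unfolding perfect_matching_def by auto
  have EAB: "E \<subseteq> A \<times> B" "A \<inter> B = {}" "finite A" "finite B" using bg unfolding bip_graph_def by auto
  have anti: "(b,a) \<notin> E" if "(a,b) \<in> E" for a b using EAB that by blast
  have finE: "finite E" using EAB finite_subset by (metis finite_SigmaI)
  have cycE: "C \<subseteq> E" if "dcycle E M C" for C
    using that arc_edge[OF ME] unfolding dcycle_def by blast
  have finC: "finite \<C>" using cyc cycE finE
    by (metis (no_types, lifting) Pow_iff finite_Pow_iff finite_subset subsetI)
  obtain vs where vs: "distinct vs" "length vs \<ge> 2"
    "\<forall>i < length vs. arc_GM E M (vs ! i) (vs ! ((i + 1) mod length vs))"
    "Cp = {edge_of E (vs ! i) (vs ! ((i + 1) mod length vs)) | i. i < length vs}"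
    using Cp(1) unfolding dcycle_def by blast
  define cov where "cov D \<longleftrightarrow> D \<subseteq> \<C> \<and> (\<forall>e \<in> Eplus R M Cp. \<exists>C \<in> D. e \<in> C)" for D
  have "cov \<C>" using cover cov_def by auto
  then obtain D where D: "cov D" and Dmin: "\<And>D'. cov D' \<Longrightarrow> card D \<le> card D'"
    using ex_has_least_nat[of cov \<C> card] by blast
  have DC: "D \<subseteq> \<C>" using D cov_def by auto
  have finD: "finite D" using DC finC finite_subset by blast
  have EpCp: "Eplus R M Cp \<subseteq> Cp" unfolding Eplus_def red_of_def by auto
  have EmCp: "Eminus R M Cp \<subseteq> Cp" unfolding Eminus_def red_of_def by auto
  have red: False if X: "X \<in> D" "Y \<in> D" "Z \<in> D" "Y \<noteq> X" "Z \<noteq> X"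
    "X \<inter> Cp \<subseteq> (Y \<inter> Cp) \<union> (Z \<inter> Cp)" for X Y Z
  proof -
    have "cov (D - {X})" unfolding cov_def
    proof (intro conjI ballI)
      show "D - {X} \<subseteq> \<C>" using DC by auto
    next
      fix e assume e: "e \<in> Eplus R M Cp"
      then obtain C where C: "C \<in> D" "e \<in> C" using D cov_def by auto
      show "\<exists>C\<in>D - {X}. e \<in> C"
      proof (cases "C = X")
        case True
        then have "e \<in> Y \<or> e \<in> Z" using X(6) C e EpCp by blast
        then show ?thesis using X by blast
      next
        case False then show ?thesis using C by blast
      qed
    qed
    then have "card D \<le> card (D - {X})" using Dmin by blast
    moreover have "card (D - {X}) < card D" using finD X(1) by (metis card_Diff1_less)
    ultimately show False by simp
  qed
  have "card {C \<in> D. e \<in> C} \<le> 2" if e: "e \<in> Eminus R M Cp" for e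
  proof (rule ccontr)
    assume "\<not> ?thesis"
    then have "Suc (Suc (Suc 0)) \<le> card {C \<in> D. e \<in> C}" by simp
    then obtain X Y Z where XYZ: "X \<in> D" "Y \<in> D" "Z \<in> D" "e \<in> X" "e \<in> Y" "e \<in> Z"
      "X \<noteq> Y" "X \<noteq> Z" "Y \<noteq> Z"
      unfolding card_le_Suc_iff by auto
    have eCp: "e \<in> Cp" using e EmCp by blast
    have dp: "dpath E M (W \<inter> Cp)" if "W \<in> D" for W using path DC that by blast
    have "X \<inter> Cp \<subseteq> (Y \<inter> Cp) \<union> (Z \<inter> Cp) \<or> Y \<inter> Cp \<subseteq> (X \<inter> Cp) \<union> (Z \<inter> Cp)
       \<or> Z \<inter> Cp \<subseteq> (X \<inter> Cp) \<union> (Y \<inter> Cp)"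
      using three_paths[OF ME anti vs(1,2,3,4) dp[OF XYZ(1)] _ _ dp[OF XYZ(2)] _ _ dp[OF XYZ(3)]]
        XYZ eCp by blast
    then show False
      using red[of X Y Z] red[of Y X Z] red[of Z X Y] XYZ by blast
  qed
  moreover have "\<forall>C \<in> D. dpath E M (C \<inter> Cp)" using path DC by blast
  ultimately show ?thesis using D DC unfolding cov_def by blast
qed

end
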